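(* Fix a utility call $\ell$ with anchor interval $[\underline u^{(a_\ell)},\overline u^{(a_\ell)}]$ and let $w_a:=\mathrm{logit}(\overline u^{(a_\ell)})-\mathrm{logit}(\underline u^{(a_\ell)})$. Assume the true comparison probability satisfies $p_\ell\in[\kappa,1-\kappa]$ for some $\kappa\in(0,\tfrac12]$, let $\eta>0$ satisfy $w_a<8\eta$, and choose $$K_\ell\ge\max\Big\{\frac{8\log(2/\delta_\ell)}{\kappa^2},\ \frac{32\log(2/\delta_\ell)}{\kappa^2(8\eta-w_a)^2}\Big\}.$$ Then on the event that $u^{(a_\ell)}(\overline y^{(a_\ell)})\in[\underline u^{(a_\ell)},\overline u^{(a_\ell)}]$ and $p_\ell\in[p^-_\ell,p^+_\ell]$, the transported interval satisfies $\overline u^{(i_\ell)}-\underline u^{(i_\ell)}\le2\eta$.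
   Context: Bradley–Terry utility model: each task–incumbent pair $(i,z)$ has a score $\theta^{(i)}(z)\in\mathbb R$, normalized so that a fixed reference has score $0$, and the utility is $u^{(i)}(z)=\sigma(\theta^{(i)}(z))$ with $\sigma(x)=1/(1+e^{-x})$, $\mathrm{logit}(p)=\log(p/(1-p))$ (with $\mathrm{logit}(0)=-\infty$, $\mathrm{logit}(1)=+\infty$, $\sigma(-\infty)=0$, $\sigma(+\infty)=1$). At utility call $\ell$, candidate task $i_\ell$ with incumbent $z$ is compared with anchor task $a_\ell$ with incumbent $z'$; the true comparison probability is $p_\ell=\sigma(\theta^{(i_\ell)}(z)-\theta^{(a_\ell)}(z'))$. One draws $K_\ell$ votes $b_{\ell,k}\in\{0,1\}$, conditionally independent with mean $p_\ell$; $\hat p_\ell:=K_\ell^{-1}\sum_kb_{\ell,k}$. With failure budget $\delta_\ell\in(0,1)$, let $\theta_p:=\sqrt{\log(2/\delta_\ell)/(2K_\ell)}$, $p^-_\ell:=\mathrm{clip}_{[0,1]}(\hat p_\ell-\theta_p)$, $p^+_\ell:=\mathrm{clip}_{[0,1]}(\hat p_\ell+\theta_p)$. Given an anchor interval $[\underline u^{(a_\ell)},\overline u^{(a_\ell)}]$, the transported interval is $\underline u^{(i_\ell)}:=\sigma(\mathrm{logit}(\underline u^{(a_\ell)})+\mathrm{logit}(p^-_\ell))$, $\overline u^{(i_\ell)}:=\sigma(\mathrm{logit}(\overline u^{(a_\ell)})+\mathrm{logit}(p^+_\ell))$. *)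

theory Defs
  imports Complex_Main "HOL-Library.Extended_Real"
begin

definition sigmoid :: "real \<Rightarrow> real" where
  "sigmoid x = 1 / (1 + exp (- x))"

fun esigmoid :: "ereal \<Rightarrow> real" where
  "esigmoid (ereal x) = sigmoid x"
| "esigmoid PInfty = 1"
| "esigmoid MInfty = 0"

definition elogit :: "real \<Rightarrow> ereal" where
  "elogit p = (if p \<le> 0 then MInfty else if 1 \<le> p then PInfty
               else ereal (ln (p / (1 - p))))"

definition clip01 :: "real \<Rightarrow> real" where
  "clip01 x = max 0 (min 1 x)"

end

theory Submission
  imports Defs
begin

lemma sigmoid_mono: "y \<le> x \<Longrightarrow> sigmoid y \<le> sigmoid x"
  unfolding sigmoid_def
  by (intro divide_left_mono) (auto intro!: mult_pos_pos add_pos_pos)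

lemma sigmoid_deriv: "(sigmoid has_real_derivative (exp (-x) / (1 + exp (-x))\<^sup>2)) (at x)"
proof -
  have ne: "1 + exp (-x) \<noteq> 0" by (smt (verit) exp_gt_zero)
  have "((\<lambda>x. 1 / (1 + exp (- x))) has_real_derivative
     (- (- exp (-x)) / (1 + exp (-x))\<^sup>2)) (at x)"
    using ne by (auto intro!: derivative_eq_intros simp: power2_eq_square)
  then show ?thesis unfolding sigmoid_def[abs_def] by simp
qed

lemma sigmoid_lip: fixes x y :: real assumes "y \<le> x" shows "sigmoid x - sigmoid y \<le> (x - y) / 4"
proof -
  have "(\<lambda>z. z / 4 - sigmoid z) y \<le> (\<lambda>z. z / 4 - sigmoid z) x"
  proof (rule DERIV_nonneg_imp_nondecreasing[OF assms])
    fix z :: real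
    let ?e = "exp (-z)"
    have e: "?e > 0" by simp
    have sq: "(1 + ?e)\<^sup>2 = 4 * ?e + (1 - ?e)\<^sup>2" by (simp add: power2_eq_square algebra_simps)
    have "4 * ?e \<le> (1 + ?e)\<^sup>2" unfolding sq by simp
    then have "?e / (1 + ?e)\<^sup>2 \<le> 1/4" using e
      by (simp add: divide_simps add_pos_pos)
    moreover have "((\<lambda>z. z / 4 - sigmoid z) has_real_derivative (1/4 - ?e / (1 + ?e)\<^sup>2)) (at z)"
      by (auto intro!: derivative_eq_intros sigmoid_deriv)
    ultimately show "\<exists>d. ((\<lambda>z. z / 4 - sigmoid z) has_real_derivative d) (at z) \<and> 0 \<le> d"
      by fastforce
  qed
  then show ?thesis by simp
qed

lemma logit_lip:
  fixes a b \<kappa> :: real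
  assumes k: "0 < \<kappa>" "\<kappa> \<le> 1/2" and ab: "\<kappa>/2 \<le> a" "a \<le> b" "b \<le> 1 - \<kappa>/2"
  shows "ln (b / (1 - b)) - ln (a / (1 - a)) \<le> (b - a) * (4 / \<kappa>)"
proof -
  let ?g = "\<lambda>x. x * (4 / \<kappa>) - (ln x - ln (1 - x))"
  have "?g a \<le> ?g b"
  proof (rule DERIV_nonneg_imp_nondecreasing[OF ab(2)])
    fix x assume x1: "a \<le> x" and x2: "x \<le> b"
    have x: "a \<le> x \<and> x \<le> b" using x1 x2 by simp
    have x0: "0 < x" "x < 1" using x ab k by auto
    have "(x - \<kappa>/2) * (1 - \<kappa>/2 - x) \<ge> 0" using x ab by (intro mult_nonneg_nonneg) auto
    then have "x * (1 - x) \<ge> (\<kappa>/2) * (1 - \<kappa>/2)" by (simp add: algebra_simps)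
    moreover have "\<kappa> * \<kappa> \<le> \<kappa> * 1" using k by (intro mult_left_mono) auto
    then have "(\<kappa>/2) * (1 - \<kappa>/2) \<ge> \<kappa> / 4" by (simp add: algebra_simps)
    ultimately have xx: "x * (1 - x) \<ge> \<kappa> / 4" by linarith
    have "1 / x + 1 / (1 - x) = 1 / (x * (1 - x))" using x0 by (simp add: field_simps)
    also have "\<dots> \<le> 1 / (\<kappa> / 4)"
      using xx k by (intro divide_left_mono) auto
    also have "\<dots> = 4 / \<kappa>" by simp
    finally have le: "1 / x + 1 / (1 - x) \<le> 4 / \<kappa>" .
    have "(?g has_real_derivative (1 * (4 / \<kappa>) - (1 / x - (0 - 1) / (1 - x)))) (at x)"
      using x0 by (intro derivative_eq_intros DERIV_ln_divide refl) auto
    then show "\<exists>d. (?g has_real_derivative d) (at x) \<and> 0 \<le> d" using le by fastforce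
  qed
  moreover have "ln (b / (1 - b)) = ln b - ln (1 - b)" "ln (a / (1 - a)) = ln a - ln (1 - a)"
    using ab k by (auto simp: ln_div)
  moreover have "(b - a) * (4 / \<kappa>) = b * (4 / \<kappa>) - a * (4 / \<kappa>)" by (rule left_diff_distrib)
  ultimately show ?thesis by linarith
qed

theorem theoremC3:
  fixes K :: nat and b :: "nat \<Rightarrow> real"
    and \<delta> \<kappa> \<eta> w lo hi \<theta>i \<theta>a :: real
  assumes votes: "\<forall>k<K. b k \<in> {0, 1}"
    and delta: "0 < \<delta>" "\<delta> < 1"
    and kappa: "0 < \<kappa>" "\<kappa> \<le> 1/2"
    and p_range: "\<kappa> \<le> sigmoid (\<theta>i - \<theta>a)" "sigmoid (\<theta>i - \<theta>a) \<le> 1 - \<kappa>"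
    and wa: "elogit hi - elogit lo = ereal w"
    and eta: "0 < \<eta>" "w < 8 * \<eta>"
    and K_ge: "real K \<ge> max (8 * ln (2 / \<delta>) / \<kappa>\<^sup>2)
                            (32 * ln (2 / \<delta>) / (\<kappa>\<^sup>2 * (8 * \<eta> - w)\<^sup>2))"
    and anchor_event: "lo \<le> sigmoid \<theta>a" "sigmoid \<theta>a \<le> hi"
    and p_event:
      "clip01 ((\<Sum>k<K. b k) / real K - sqrt (ln (2 / \<delta>) / (2 * real K))) \<le> sigmoid (\<theta>i - \<theta>a)"
      "sigmoid (\<theta>i - \<theta>a) \<le> clip01 ((\<Sum>k<K. b k) / real K + sqrt (ln (2 / \<delta>) / (2 * real K)))"
  shows "esigmoid (elogit hi + elogit (clip01 ((\<Sum>k<K. b k) / real K + sqrt (ln (2 / \<delta>) / (2 * real K)))))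
       - esigmoid (elogit lo + elogit (clip01 ((\<Sum>k<K. b k) / real K - sqrt (ln (2 / \<delta>) / (2 * real K)))))
       \<le> 2 * \<eta>"
proof -
  define m where "m = (\<Sum>k<K. b k) / real K"
  define L where "L = ln (2 / \<delta>)"
  define t where "t = sqrt (L / (2 * real K))"
  define p where "p = sigmoid (\<theta>i - \<theta>a)"
  have L0: "L > 0" unfolding L_def using delta by simp
  have K1: "real K \<ge> 8 * L / \<kappa>\<^sup>2" and K2: "real K \<ge> 32 * L / (\<kappa>\<^sup>2 * (8 * \<eta> - w)\<^sup>2)"
    using K_ge unfolding L_def by auto
  have K0: "real K > 0" using K1 L0 kappa
    by (smt (verit) divide_pos_pos zero_less_power)
  have d0: "8 * \<eta> - w > 0" using eta by simp
  have t0: "t \<ge> 0" unfolding t_def using L0 K0 by simp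
  have "L / (2 * real K) \<le> (\<kappa>/4)\<^sup>2"
    using K1 K0 kappa L0 by (simp add: field_simps power2_eq_square)
  then have t1: "t \<le> \<kappa>/4" unfolding t_def using kappa
    by (metis real_sqrt_le_mono real_sqrt_abs abs_of_pos divide_pos_pos zero_less_numeral)
  define D where "D = \<kappa>\<^sup>2 * (8 * \<eta> - w)\<^sup>2"
  have D0: "D > 0" unfolding D_def using kappa d0 by simp
  have "32 * L \<le> real K * D" using K2 D0 unfolding D_def[symmetric]
    by (simp add: pos_divide_le_eq)
  then have "L / (2 * real K) \<le> D / 64" using K0 by (simp add: field_simps)
  moreover have "D / 64 = (\<kappa> * (8 * \<eta> - w) / 8)\<^sup>2" unfolding D_def
    by (simp add: power_mult_distrib power_divide)
  ultimately have "L / (2 * real K) \<le> (\<kappa> * (8 * \<eta> - w) / 8)\<^sup>2" by simp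
  then have t2: "t \<le> \<kappa> * (8 * \<eta> - w) / 8" unfolding t_def using kappa d0
    by (metis real_sqrt_le_mono real_sqrt_abs abs_of_pos divide_pos_pos zero_less_numeral mult_pos_pos)
  have pe1: "clip01 (m - t) \<le> p" and pe2: "p \<le> clip01 (m + t)"
    using p_event unfolding m_def t_def L_def p_def by auto
  have pk: "\<kappa> \<le> p" "p \<le> 1 - \<kappa>" using p_range unfolding p_def by auto
  have "p \<le> m + t" using pe2 pk kappa unfolding clip01_def by auto
  moreover have "m - t \<le> p" using pe1 pk kappa unfolding clip01_def by auto
  ultimately have lo_b: "\<kappa>/2 \<le> m - t" and hi_b: "m + t \<le> 1 - \<kappa>/2"
    using pk t1 by linarith+
  have cm: "clip01 (m - t) = m - t" "clip01 (m + t) = m + t"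
    using lo_b hi_b kappa t0 unfolding clip01_def by auto
  have em: "elogit (m - t) = ereal (ln ((m - t) / (1 - (m - t))))"
           "elogit (m + t) = ereal (ln ((m + t) / (1 - (m + t))))"
    using lo_b hi_b kappa t0 unfolding elogit_def by auto
  have lg: "ln ((m + t) / (1 - (m + t))) - ln ((m - t) / (1 - (m - t))) \<le> (2 * t) * (4 / \<kappa>)"
    using logit_lip[OF kappa lo_b _ hi_b] t0 by simp
  have "(2 * t) * (4 / \<kappa>) \<le> 8 * \<eta> - w" using t2 kappa by (simp add: field_simps)
  with lg have lg2: "ln ((m + t) / (1 - (m + t))) - ln ((m - t) / (1 - (m - t))) \<le> 8 * \<eta> - w"
    by linarith
  have hl: "0 < hi" "hi < 1" "0 < lo" "lo < 1" and ehl: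
    "elogit hi = ereal (ln (hi / (1 - hi)))" "elogit lo = ereal (ln (lo / (1 - lo)))"
    using wa unfolding elogit_def by (auto split: if_splits)
  have w: "w = ln (hi / (1 - hi)) - ln (lo / (1 - lo))" using wa ehl by simp
  define X where "X = ln (hi / (1 - hi)) + ln ((m + t) / (1 - (m + t)))"
  define Y where "Y = ln (lo / (1 - lo)) + ln ((m - t) / (1 - (m - t)))"
  have XY: "X \<le> Y + 8 * \<eta>" using lg2 w unfolding X_def Y_def by simp
  have "sigmoid X - sigmoid Y \<le> sigmoid (Y + 8 * \<eta>) - sigmoid Y"
    using sigmoid_mono[OF XY] by simp
  also have "\<dots> \<le> 2 * \<eta>" using sigmoid_lip[of Y "Y + 8 * \<eta>"] eta by simp
  finally have "sigmoid X - sigmoid Y \<le> 2 * \<eta>" .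
  then show ?thesis
    unfolding m_def[symmetric] L_def[symmetric] t_def[symmetric] cm em ehl X_def Y_def
    by simp
qed

end
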